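(* Let $p$ be a positive integer, let $q,s$ be positive integers with $4q=9s$, let $r_1,\dots,r_p$ be positive integers with $\gcd(r_i,2q)=1$, and let $t$ be a positive integer with $\gcd(t,3s)=1$. Let $\Omega=\{(U,V)\in\mathbb R^2:a<UV<b\}$ with $-\infty\le a<0<b\le\infty$ and $S^{4p+5}=\{(z,w,x)\in\mathbb C^p\times\mathbb C^p\times\mathbb C^3:|z|^2+|w|^2+|x|^2=1\}$. Define $K_2:\Omega\times S^{4p+5}\to\Omega\times S^{4p+5}$ by $K_2(U,V,z,w,x_1,x_2,x_3)=(V,U,w,\zeta z,x_2,x_3,\omega x_1)$, where $(\zeta z)_j=e^{i\pi r_j/q}z_j$ and $\omega=e^{2\pi i t/(3s)}$. Then $K_2$ generates a cyclic group of order $4q=9s$ acting freely and properly discontinuously on $\Omega\times S^{4p+5}$; moreover $K_2^2$ acts trivially on $\Omega$ and generates a cyclic group of order $2q$ acting freely on $S^{4p+5}$. In particular the smallest admissible $q$ is $9$.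
   Context: In Myers–Perry angle coordinates ($z_j=\mu_je^{i\theta_j}$, $w_j=\nu_je^{i\varphi_j}$, $x_k=\rho_ke^{i\psi_k}$), $K_2$ maps $(U,V,\mu,\nu,\rho_1,\rho_2,\rho_3,\theta,\varphi,\psi_1,\psi_2,\psi_3)$ to $(V,U,\nu,\mu,\rho_2,\rho_3,\rho_1,\varphi,\theta+(\pi/q)r,\psi_2,\psi_3,\psi_1+2\pi t/(3s))$. In the paper this models the $D=4p+7$ Myers–Perry(-AdS) black hole with angular momentum in $\theta_i$ equal to minus that in $\varphi_i$ and vanishing angular momenta in the $\psi_k$, for which $K_2$ is an isometry and the quotient is a rotating geon. *)

theory Defs
  imports "HOL-Analysis.Analysis" "HOL-Library.Extended_Real"
begin

type_synonym 'n sphpt = "(complex^'n) \<times> (complex^'n) \<times> complex \<times> complex \<times> complex"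

definition Omega :: "ereal \<Rightarrow> ereal \<Rightarrow> (real \<times> real) set" where
  "Omega a b = {(U, V). a < ereal (U * V) \<and> ereal (U * V) < b}"

text \<open>The unit sphere S^{4p+5} in C^p x C^p x C^3, p = CARD('n).\<close>
definition Sph :: "'n::finite sphpt set" where
  "Sph = {(z, w, x1, x2, x3). (norm z)^2 + (norm w)^2 + (cmod x1)^2 + (cmod x2)^2 + (cmod x3)^2 = 1}"

definition zeta_act :: "nat \<Rightarrow> ('n::finite \<Rightarrow> nat) \<Rightarrow> complex^'n \<Rightarrow> complex^'n" where
  "zeta_act q r z = (\<chi> j. exp (\<i> * complex_of_real (pi * real (r j) / real q)) * z $ j)"

definition omega :: "nat \<Rightarrow> nat \<Rightarrow> complex" where
  "omega t s = exp (2 * pi * \<i> * complex_of_real (real t / (3 * real s)))"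

definition K2_sph :: "nat \<Rightarrow> ('n::finite \<Rightarrow> nat) \<Rightarrow> nat \<Rightarrow> nat \<Rightarrow> 'n sphpt \<Rightarrow> 'n sphpt" where
  "K2_sph q r t s = (\<lambda>(z, w, x1, x2, x3). (w, zeta_act q r z, x2, x3, omega t s * x1))"

definition K2 :: "nat \<Rightarrow> ('n::finite \<Rightarrow> nat) \<Rightarrow> nat \<Rightarrow> nat \<Rightarrow>
    (real \<times> real) \<times> 'n sphpt \<Rightarrow> (real \<times> real) \<times> 'n sphpt" where
  "K2 q r t s = (\<lambda>((U, V), y). ((V, U), K2_sph q r t s y))"

definition generates_cyclic_of_order :: "('a \<Rightarrow> 'a) \<Rightarrow> 'a set \<Rightarrow> nat \<Rightarrow> bool" where
  "generates_cyclic_of_order g X n \<longleftrightarrow> 0 < n \<and> (\<forall>x\<in>X. (g ^^ n) x = x) \<and>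
     (\<forall>k. 0 < k \<and> k < n \<longrightarrow> \<not> (\<forall>x\<in>X. (g ^^ k) x = x))"

definition acts_freely :: "('a \<Rightarrow> 'a) \<Rightarrow> nat \<Rightarrow> 'a set \<Rightarrow> bool" where
  "acts_freely g n X \<longleftrightarrow> (\<forall>k x. 0 < k \<and> k < n \<and> x \<in> X \<longrightarrow> (g ^^ k) x \<noteq> x)"

definition properly_discontinuous :: "('a::topological_space \<Rightarrow> 'a) \<Rightarrow> nat \<Rightarrow> 'a set \<Rightarrow> bool" where
  "properly_discontinuous g n X \<longleftrightarrow> (\<forall>x\<in>X. \<exists>U. openin (top_of_set X) U \<and> x \<in> U \<and>
     (\<forall>k. 0 < k \<and> k < n \<longrightarrow> (g ^^ k) ` U \<inter> U = {}))"

end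

theory Submission imports Defs begin

definition Yf :: "nat \<Rightarrow> ('n::finite \<Rightarrow> nat) \<Rightarrow> (complex^'n) \<times> (complex^'n) \<Rightarrow> (complex^'n) \<times> (complex^'n)" where
  "Yf q r = (\<lambda>(z, w). (w, zeta_act q r z))"
definition Xf :: "nat \<Rightarrow> nat \<Rightarrow> complex \<times> complex \<times> complex \<Rightarrow> complex \<times> complex \<times> complex" where
  "Xf t s = (\<lambda>(x1, x2, x3). (x2, x3, omega t s * x1))"

lemma K2_sph_pow: "(K2_sph q r t s ^^ n) (z, w, x) = (fst ((Yf q r ^^ n) (z, w)), snd ((Yf q r ^^ n) (z, w)), (Xf t s ^^ n) x)"
  by (induction n) (auto simp: K2_sph_def Yf_def Xf_def split: prod.splits)

lemma map_prod_pow: "(map_prod (f::'a\<Rightarrow>'a) (g::'b\<Rightarrow>'b) ^^ k) = map_prod (f ^^ k) (g ^^ k)"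
proof (induction k)
  case 0 then show ?case by (simp add: map_prod.id)
next
  case (Suc k) then show ?case by (simp add: fun_eq_iff map_prod_def split: prod.splits)
qed

lemma Yf2: "Yf q r ^^ 2 = map_prod (zeta_act q r) (zeta_act q r)"
  by (auto simp: Yf_def fun_eq_iff numeral_2_eq_2)

lemma Yf_even: "Yf q r ^^ (2 * k) = map_prod (zeta_act q r ^^ k) (zeta_act q r ^^ k)"
  by (metis Yf2 funpow_mult map_prod_pow)

lemma zeta_pow: "(zeta_act q r ^^ k) z = (\<chi> j. exp (\<i> * complex_of_real (pi * real (r j) * real k / real q)) * z $ j)"
proof (induction k)
  case 0 then show ?case by (simp add: vec_eq_iff)
next
  case (Suc k)
  show ?case
    apply (simp only: funpow.simps comp_def Suc)
    apply (simp add: zeta_act_def vec_eq_iff mult.assoc[symmetric] exp_add[symmetric])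
    apply (intro allI disjI2 arg_cong[where f=exp])
    by (simp add: add_divide_distrib[symmetric] algebra_simps)
qed

lemma Xf3: "(Xf t s ^^ 3) (x1, x2, x3) = (omega t s * x1, omega t s * x2, omega t s * x3)"
  by (simp add: Xf_def numeral_3_eq_3)

lemma Xf_mult3: "(Xf t s ^^ (3 * k)) (x1, x2, x3) = (omega t s ^ k * x1, omega t s ^ k * x2, omega t s ^ k * x3)"
proof -
  have "((Xf t s ^^ 3) ^^ k) (x1, x2, x3) = (omega t s ^ k * x1, omega t s ^ k * x2, omega t s ^ k * x3)"
    by (induction k) (auto simp: Xf3)
  then show ?thesis by (simp add: funpow_mult)
qed

lemma omega_pow: "omega t s ^ k = exp (2 * pi * \<i> * complex_of_real (real t * real k / (3 * real s)))"
  unfolding omega_def exp_of_nat_mult[symmetric]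
  by (intro arg_cong[where f=exp]) (simp add: field_simps)

lemma fix_pow: "f x = x \<Longrightarrow> (f ^^ n) x = x"
  by (induction n) auto

lemma exp_real_eq_1:
  assumes "exp (\<i> * complex_of_real \<theta>) = 1"
  obtains n :: int where "\<theta> = 2 * pi * n"
proof -
  from assms[unfolded exp_eq_1] obtain n :: int where "\<theta> = of_int (2 * n) * pi" by auto
  then show ?thesis using that[of n] by simp
qed

lemma zeta_root:
  assumes q: "0 < q" and cop: "coprime (r j) (2 * q)"
    and e: "exp (\<i> * complex_of_real (pi * real (r j) * real k / real q)) = 1"
  shows "2 * q dvd k"
proof -
  obtain n :: int where n: "pi * real (r j) * real k / real q = 2 * pi * n"
    using exp_real_eq_1[OF e] by blast
  then have "real (r j) * real k = 2 * real q * n" using q by (simp add: field_simps)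
  then have "real_of_int (int (r j * k)) = real_of_int (int (2 * q) * n)" by simp
  then have "int (r j * k) = int (2 * q) * n" by (simp only: of_int_eq_iff)
  then have "int (2 * q) dvd int (r j * k)" by simp
  then have "2 * q dvd r j * k" by (simp only: of_nat_dvd_iff)
  moreover have "coprime (2 * q) (r j)" using cop by (simp only: coprime_commute)
  ultimately show ?thesis using coprime_dvd_mult_right_iff by blast
qed

lemma omega_root:
  assumes s: "0 < s" and cop: "coprime t (3 * s)" and e: "omega t s ^ k = 1"
  shows "3 * s dvd k"
proof -
  have e': "exp (\<i> * complex_of_real (2 * pi * real t * real k / (3 * real s))) = 1"
    using e unfolding omega_pow by (simp add: algebra_simps)
  obtain n :: int where n: "2 * pi * real t * real k / (3 * real s) = 2 * pi * n"
    using exp_real_eq_1[OF e'] by blast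
  then have "real t * real k = 3 * real s * n" using s by (simp add: field_simps)
  then have "real_of_int (int (t * k)) = real_of_int (int (3 * s) * n)" by simp
  then have "int (t * k) = int (3 * s) * n" by (simp only: of_int_eq_iff)
  then have "int (3 * s) dvd int (t * k)" by simp
  then have "3 * s dvd t * k" by (simp only: of_nat_dvd_iff)
  moreover have "coprime (3 * s) t" using cop by (simp only: coprime_commute)
  ultimately show ?thesis using coprime_dvd_mult_right_iff by blast
qed

lemma zeta_fix:
  assumes q: "0 < q" and cop: "\<forall>j. coprime (r j) (2 * q)"
    and f: "(zeta_act q r ^^ k) z = z" and nz: "z \<noteq> 0"
  shows "2 * q dvd k"
proof -
  from nz obtain j where j: "z $ j \<noteq> 0" by (auto simp: vec_eq_iff)
  from f have "(zeta_act q r ^^ k) z $ j = z $ j" by simp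
  then have "exp (\<i> * complex_of_real (pi * real (r j) * real k / real q)) * z $ j = 1 * z $ j"
    unfolding zeta_pow by (simp only: vec_lambda_beta mult_1_left)
  then have e: "exp (\<i> * complex_of_real (pi * real (r j) * real k / real q)) = 1"
    using j mult_right_cancel by blast
  have c: "coprime (r j) (2 * q)" using cop by blast
  show ?thesis using zeta_root[of q r j k, OF q c e] .
qed

lemma Yfix:
  assumes q: "0 < q" and cop: "\<forall>j. coprime (r j) (2 * q)"
    and f: "(Yf q r ^^ k) p = p" and nz: "p \<noteq> (0, 0)"
  shows "4 * q dvd k"
proof -
  have gen: "2 * q dvd m" if "(Yf q r ^^ (2 * m)) p = p" for m
  proof -
    obtain z w where p: "p = (z, w)" by fastforce
    from that have "(zeta_act q r ^^ m) z = z" "(zeta_act q r ^^ m) w = w"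
      unfolding Yf_even p by auto
    moreover have "z \<noteq> 0 \<or> w \<noteq> 0" using nz p by auto
    ultimately show ?thesis using zeta_fix[OF q cop] by blast
  qed
  have "(Yf q r ^^ (2 * k)) p = p"
    using fix_pow[of "Yf q r ^^ k" p 2, OF f] by (simp add: funpow_mult mult.commute)
  then have "2 * q dvd k" by (rule gen)
  then obtain m where m: "k = 2 * m" using dvd_mult_left[of 2 q k] by (auto elim: dvdE)
  with f have "2 * q dvd m" using gen by simp
  then show ?thesis using m by auto
qed

lemma Xfix:
  assumes s: "0 < s" and cop: "coprime t (3 * s)"
    and f: "(Xf t s ^^ k) x = x" and nz: "x \<noteq> (0, 0, 0)"
  shows "9 * s dvd k"
proof -
  obtain x1 x2 x3 where x: "x = (x1, x2, x3)" by (cases x) auto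
  have gen: "3 * s dvd m" if "(Xf t s ^^ (3 * m)) x = x" for m
  proof -
    from that have "omega t s ^ m * x1 = x1" "omega t s ^ m * x2 = x2" "omega t s ^ m * x3 = x3"
      unfolding x Xf_mult3 by auto
    then have "omega t s ^ m = 1" using nz x by auto
    then show ?thesis using omega_root[OF s cop] by blast
  qed
  have "(Xf t s ^^ (3 * k)) x = x"
    using fix_pow[of "Xf t s ^^ k" x 3, OF f] by (simp add: funpow_mult mult.commute)
  then have "3 * s dvd k" by (rule gen)
  then obtain m where m: "k = 3 * m" using dvd_mult_left[of 3 s k] by (auto elim: dvdE)
  with f have "3 * s dvd m" using gen by simp
  then show ?thesis using m by auto
qed

lemma sph_nonzero:
  assumes "(z, w, x1, x2, x3) \<in> Sph"
  shows "(z, w) \<noteq> (0, 0) \<or> (x1, x2, x3) \<noteq> (0, 0, 0)"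
  using assms by (auto simp: Sph_def)

lemma sph_free:
  assumes q: "0 < q" and s: "0 < s" and qs: "4 * q = 9 * s"
    and cr: "\<forall>j. coprime (r j) (2 * q)" and ct: "coprime t (3 * s)"
    and y: "y \<in> Sph" and k: "0 < k" "k < 4 * q"
  shows "(K2_sph q r t s ^^ k) y \<noteq> y"
proof
  assume eq: "(K2_sph q r t s ^^ k) y = y"
  obtain z w x1 x2 x3 where yy: "y = (z, w, x1, x2, x3)" by (cases y) auto
  from eq have e1: "(Yf q r ^^ k) (z, w) = (z, w)" and e2: "(Xf t s ^^ k) (x1, x2, x3) = (x1, x2, x3)"
    unfolding yy K2_sph_pow by (auto simp: prod_eq_iff)
  have "4 * q dvd k"
  proof (cases "(z, w) \<noteq> (0, 0)")
    case True then show ?thesis using Yfix[OF q cr e1] by blast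
  next
    case False
    then have "(x1, x2, x3) \<noteq> (0, 0, 0)" using sph_nonzero y yy by blast
    then show ?thesis using Xfix[OF s ct e2] qs by simp
  qed
  with k show False using nat_dvd_not_less by blast
qed

lemma zeta_id:
  assumes q: "0 < q"
  shows "(zeta_act q r ^^ (2 * q)) z = z"
proof -
  have "exp (\<i> * complex_of_real (pi * real (r j) * real (2 * q) / real q)) = 1" for j
  proof -
    have "pi * real (r j) * real (2 * q) / real q = of_int (2 * int (r j)) * pi" using q by simp
    then show ?thesis unfolding exp_eq_1 by (simp del: of_nat_mult) (metis of_int_of_nat_eq)
  qed
  then show ?thesis unfolding zeta_pow by (simp add: vec_eq_iff)
qed

lemma Yf_id:
  assumes q: "0 < q"
  shows "(Yf q r ^^ (4 * q)) p = p"
proof -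
  have "Yf q r ^^ (4 * q) = Yf q r ^^ (2 * (2 * q))" by simp
  then show ?thesis unfolding Yf_even by (cases p) (simp add: zeta_id[OF q])
qed

lemma Xf_id:
  assumes s: "0 < s"
  shows "(Xf t s ^^ (9 * s)) x = x"
proof -
  have o: "omega t s ^ (3 * s) = 1"
  proof -
    have "2 * pi * real t * real (3 * s) / (3 * real s) = of_int (2 * int t) * pi" using s by simp
    then have "exp (\<i> * complex_of_real (2 * pi * real t * real (3 * s) / (3 * real s))) = 1"
      unfolding exp_eq_1 by (simp del: of_nat_mult) (metis of_int_of_nat_eq)
    then show ?thesis unfolding omega_pow by (simp add: algebra_simps)
  qed
  have e: "Xf t s ^^ (9 * s) = Xf t s ^^ (3 * (3 * s))" by simp
  show ?thesis by (cases x) (simp only: e Xf_mult3 o mult_1_left)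
qed

lemma sph_id:
  assumes q: "0 < q" and s: "0 < s" and qs: "4 * q = 9 * s"
  shows "(K2_sph q r t s ^^ (4 * q)) y = y"
proof -
  obtain z w x where yy: "y = (z, w, x)" by (cases y) auto
  show ?thesis unfolding yy K2_sph_pow using Yf_id[OF q, of r "(z, w)"] Xf_id[OF s, of t x] qs by simp
qed

lemma K2_pow: "(K2 q r t s ^^ n) ((U, V), y) = ((if even n then (U, V) else (V, U)), (K2_sph q r t s ^^ n) y)"
  by (induction n) (auto simp: K2_def)

lemma norm_zeta: "norm (zeta_act q r z) = norm z"
  unfolding norm_vec_def zeta_act_def by (simp add: norm_mult)

lemma norm_omega: "norm (omega t s) = 1"
  unfolding omega_def by (simp add: norm_exp_eq_Re)

lemma K2_sph_Sph: "y \<in> Sph \<Longrightarrow> K2_sph q r t s y \<in> Sph"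
  by (cases y) (auto simp: Sph_def K2_sph_def norm_zeta norm_mult norm_omega)

lemma Omega_swap: "(U, V) \<in> Omega a b \<Longrightarrow> (V, U) \<in> Omega a b"
  by (auto simp: Omega_def mult.commute)

lemma K2_X: "x \<in> Omega a b \<times> Sph \<Longrightarrow> K2 q r t s x \<in> Omega a b \<times> Sph"
  by (auto simp: K2_def Omega_swap K2_sph_Sph)

lemma K2_pow_X: "x \<in> Omega a b \<times> Sph \<Longrightarrow> (K2 q r t s ^^ n) x \<in> Omega a b \<times> Sph"
  by (induction n) (auto intro: K2_X)

lemma K2_alt: "K2 q r t s = (\<lambda>p. ((snd (fst p), fst (fst p)), K2_sph q r t s (snd p)))"
  by (auto simp: K2_def fun_eq_iff)

lemma K2_sph_alt: "K2_sph q r t s = (\<lambda>y. (fst (snd y), zeta_act q r (fst y), fst (snd (snd (snd y))),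
    snd (snd (snd (snd y))), omega t s * fst (snd (snd y))))"
  by (auto simp: K2_sph_def fun_eq_iff)

lemma K2_cont: "continuous_on UNIV (K2 q r t s)"
  unfolding K2_alt K2_sph_alt zeta_act_def by (intro continuous_intros)

lemma pow_cont: "continuous_on UNIV (g::'a::topological_space \<Rightarrow> 'a) \<Longrightarrow> continuous_on UNIV (g ^^ k)"
proof (induction k)
  case 0
  have "g ^^ 0 = (\<lambda>x. x)" by (rule ext) simp
  then show ?case using continuous_on_id' by simp
next
  case (Suc k)
  then have "continuous_on UNIV (g \<circ> (g ^^ k))"
    by (intro continuous_on_compose) (auto intro: continuous_on_subset)
  then show ?case by simp
qed

lemma pd_general:
  fixes g :: "'a::t2_space \<Rightarrow> 'a"
  assumes c: "continuous_on UNIV g" and fr: "\<forall>x\<in>X. \<forall>k. 0 < k \<and> k < n \<longrightarrow> (g ^^ k) x \<noteq> x"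
  shows "properly_discontinuous g n X"
  unfolding properly_discontinuous_def
proof
  fix x assume x: "x \<in> X"
  have "\<forall>k\<in>{0<..<n}. \<exists>W. open W \<and> x \<in> W \<and> (g ^^ k) ` W \<inter> W = {}"
  proof
    fix k assume k: "k \<in> {0<..<n}"
    then have "(g ^^ k) x \<noteq> x" using fr x by auto
    then obtain A B where AB: "open A" "open B" "x \<in> A" "(g ^^ k) x \<in> B" "A \<inter> B = {}"
      using hausdorff by metis
    have o: "open ((g ^^ k) -` B)" using open_vimage[OF AB(2) pow_cont[OF c]] .
    show "\<exists>W. open W \<and> x \<in> W \<and> (g ^^ k) ` W \<inter> W = {}"
      by (rule exI[of _ "A \<inter> (g ^^ k) -` B"]) (use AB o in auto)
  qed
  then obtain W where W: "\<forall>k\<in>{0<..<n}. open (W k) \<and> x \<in> W k \<and> (g ^^ k) ` W k \<inter> W k = {}"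
    by metis
  define U where "U = X \<inter> (\<Inter>k\<in>{0<..<n}. W k)"
  have "open (\<Inter>k\<in>{0<..<n}. W k)" using W by (intro open_INT) auto
  then have "openin (top_of_set X) U" unfolding U_def by (rule openin_open_Int)
  moreover have "x \<in> U" using x W unfolding U_def by auto
  moreover have "\<forall>k. 0 < k \<and> k < n \<longrightarrow> (g ^^ k) ` U \<inter> U = {}"
  proof (intro allI impI)
    fix k assume k: "0 < k \<and> k < n"
    then have "(g ^^ k) ` W k \<inter> W k = {}" "U \<subseteq> W k" using W unfolding U_def by auto
    then show "(g ^^ k) ` U \<inter> U = {}" by blast
  qed
  ultimately show "\<exists>U. openin (top_of_set X) U \<and> x \<in> U \<and> (\<forall>k. 0 < k \<and> k < n \<longrightarrow> (g ^^ k) ` U \<inter> U = {})"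
    by blast
qed

lemma K2_pow': "(K2 q r t s ^^ n) x = ((if even n then fst x else prod.swap (fst x)), (K2_sph q r t s ^^ n) (snd x))"
  by (induction n) (auto simp: K2_alt prod.swap_def)

lemma y0_Sph: "(0, 0, 1, 0, 0) \<in> (Sph :: 'n::finite sphpt set)"
  unfolding Sph_def
  apply (rule CollectI)
  apply (subst case_prod_conv)+
  by simp
lemma o0_Omega: "(a::ereal) < 0 \<Longrightarrow> 0 < b \<Longrightarrow> (0, 0) \<in> Omega a b"
  unfolding Omega_def
  apply (rule CollectI)
  apply (subst case_prod_conv)+
  by (simp add: zero_ereal_def)

theorem mainTheorem6:
  fixes q s t :: nat and r :: "'n::finite \<Rightarrow> nat" and a b :: ereal
  assumes "0 < q" and "0 < s" and "4 * q = 9 * s"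
    and "\<forall>j. 0 < r j \<and> coprime (r j) (2 * q)"
    and "0 < t" and "coprime t (3 * s)"
    and "a < 0" and "0 < b"
  defines "X \<equiv> Omega a b \<times> (Sph :: 'n sphpt set)"
  shows "K2 q r t s ` X = X
    \<and> (\<exists>h. homeomorphism X X (K2 q r t s) h)
    \<and> generates_cyclic_of_order (K2 q r t s) X (4 * q)
    \<and> acts_freely (K2 q r t s) (4 * q) X
    \<and> properly_discontinuous (K2 q r t s) (4 * q) X
    \<and> (\<forall>x\<in>X. fst ((K2 q r t s ^^ 2) x) = fst x)
    \<and> (\<forall>x\<in>X. snd ((K2 q r t s ^^ 2) x) = (K2_sph q r t s ^^ 2) (snd x))
    \<and> generates_cyclic_of_order (K2_sph q r t s ^^ 2) Sph (2 * q)
    \<and> acts_freely (K2_sph q r t s ^^ 2) (2 * q) Sph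
    \<and> 9 dvd q
    \<and> (LEAST q'::nat. 0 < q' \<and> (\<exists>s'::nat. 0 < s' \<and> 4 * q' = 9 * s')) = 9"
proof -
  note q = assms(1) and s = assms(2) and qs = assms(3)
  have cr: "\<forall>j. coprime (r j) (2 * q)" using assms(4) by blast
  note ct = assms(6)
  let ?K = "K2 q r t s"
  let ?S = "K2_sph q r t s"
  have KX: "(?K ^^ n) x \<in> X" if "x \<in> X" for x n
    using that unfolding X_def by (rule K2_pow_X)
  have KX1: "?K x \<in> X" if "x \<in> X" for x
    using that unfolding X_def by (rule K2_X)
  have Kid: "(?K ^^ (4 * q)) x = x" for x
    unfolding K2_pow' sph_id[OF q s qs] by simp
  have Kfree: "(?K ^^ k) x \<noteq> x" if "x \<in> X" "0 < k" "k < 4 * q" for x k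
  proof -
    have sx: "snd x \<in> Sph" using that(1) unfolding X_def by (simp add: mem_Times_iff)
    have "(?S ^^ k) (snd x) \<noteq> snd x" by (rule sph_free[OF q s qs cr ct sx that(2,3)])
    then show ?thesis unfolding K2_pow' by (metis snd_conv)
  qed
  define h where "h = ?K ^^ (4 * q - 1)"
  have e4: "Suc (4 * q - 1) = 4 * q" using q by simp
  have hK: "h (?K x) = x" for x
  proof -
    have "h (?K x) = (?K ^^ Suc (4 * q - 1)) x" unfolding h_def funpow_Suc_right by simp
    then show ?thesis unfolding e4 Kid .
  qed
  have Kh: "?K (h x) = x" for x
  proof -
    have "?K (h x) = (?K ^^ Suc (4 * q - 1)) x" unfolding h_def by simp
    then show ?thesis unfolding e4 Kid .
  qed
  have img: "?K ` X = X"
  proof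
    show "?K ` X \<subseteq> X" using KX1 by (rule image_subsetI)
    show "X \<subseteq> ?K ` X"
    proof
      fix x assume "x \<in> X"
      then have "h x \<in> X" unfolding h_def by (rule KX)
      then have "?K (h x) \<in> ?K ` X" by (rule imageI)
      then show "x \<in> ?K ` X" unfolding Kh .
    qed
  qed
  have himg: "h ` X = X"
  proof
    show "h ` X \<subseteq> X" unfolding h_def using KX by (rule image_subsetI)
    show "X \<subseteq> h ` X"
    proof
      fix x assume "x \<in> X"
      then have "?K x \<in> X" by (rule KX1)
      then have "h (?K x) \<in> h ` X" by (rule imageI)
      then show "x \<in> h ` X" unfolding hK .
    qed
  qed
  have c1: "continuous_on X ?K" using continuous_on_subset[OF K2_cont, of X] by simp
  have c2: "continuous_on X h" unfolding h_def using continuous_on_subset[OF pow_cont[OF K2_cont], of X] by simp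
  have homeo: "homeomorphism X X ?K h"
    unfolding homeomorphism_def
  proof (intro conjI ballI)
    show "h (?K x) = x" for x by (rule hK)
    show "?K (h x) = x" for x by (rule Kh)
  qed (fact img himg c1 c2)+
  have ex: "\<exists>h. homeomorphism X X ?K h" using homeo by (rule exI[of _ h])
  have y0: "(0, 0, 1, 0, 0) \<in> (Sph :: 'n sphpt set)" by (rule y0_Sph)
  have o0: "(0, 0) \<in> Omega a b" using assms(7,8) by (rule o0_Omega)
  have x0: "((0, 0), (0, 0, 1, 0, 0)) \<in> X"
    unfolding X_def using o0 y0 by (rule mem_Sigma_iff[THEN iffD2, OF conjI])
  have free: "acts_freely ?K (4 * q) X" unfolding acts_freely_def
    by (intro allI impI, elim conjE, rule Kfree)
  have gen: "generates_cyclic_of_order ?K X (4 * q)"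
    unfolding generates_cyclic_of_order_def
  proof (intro conjI ballI allI impI)
    show "0 < 4 * q" using q by simp
    show "(?K ^^ (4 * q)) x = x" for x by (rule Kid)
    fix k assume k: "0 < k \<and> k < 4 * q"
    show "\<not> (\<forall>x\<in>X. (?K ^^ k) x = x)"
    proof
      assume "\<forall>x\<in>X. (?K ^^ k) x = x"
      then have "(?K ^^ k) ((0, 0), (0, 0, 1, 0, 0)) = ((0, 0), (0, 0, 1, 0, 0))" using x0 by (rule bspec)
      moreover have "(?K ^^ k) ((0, 0), (0, 0, 1, 0, 0)) \<noteq> ((0, 0), (0, 0, 1, 0, 0))"
        using k by (intro Kfree[OF x0]) auto
      ultimately show False by contradiction
    qed
  qed
  have pd: "properly_discontinuous ?K (4 * q) X"
    by (rule pd_general[OF K2_cont]) (intro ballI allI impI, elim conjE, rule Kfree)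
  have fst2: "\<forall>x\<in>X. fst ((?K ^^ 2) x) = fst x"
    unfolding K2_pow' by simp
  have snd2: "\<forall>x\<in>X. snd ((?K ^^ 2) x) = (?S ^^ 2) (snd x)"
    unfolding K2_pow' by simp
  have S2id: "((?S ^^ 2) ^^ (2 * q)) y = y" for y
    by (simp add: funpow_mult sph_id[OF q s qs])
  have S2free: "((?S ^^ 2) ^^ k) y \<noteq> y" if "y \<in> Sph" "0 < k" "k < 2 * q" for y k
  proof -
    have "0 < 2 * k" "2 * k < 4 * q" using that(2,3) by auto
    then have "(?S ^^ (2 * k)) y \<noteq> y" by (rule sph_free[OF q s qs cr ct that(1)])
    then show ?thesis unfolding funpow_mult .
  qed
  have free2: "acts_freely (?S ^^ 2) (2 * q) Sph" unfolding acts_freely_def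
    by (intro allI impI, elim conjE, rule S2free)
  have gen2: "generates_cyclic_of_order (?S ^^ 2) Sph (2 * q)"
    unfolding generates_cyclic_of_order_def
  proof (intro conjI ballI allI impI)
    show "0 < 2 * q" using q by simp
    show "((?S ^^ 2) ^^ (2 * q)) x = x" for x by (rule S2id)
    fix k assume k: "0 < k \<and> k < 2 * q"
    show "\<not> (\<forall>x\<in>Sph. ((?S ^^ 2) ^^ k) x = x)"
    proof
      assume "\<forall>x\<in>Sph. ((?S ^^ 2) ^^ k) x = x"
      then have "((?S ^^ 2) ^^ k) (0, 0, 1, 0, 0) = (0, 0, 1, 0, 0)" using y0 by (rule bspec)
      moreover have "((?S ^^ 2) ^^ k) (0, 0, 1, 0, 0) \<noteq> (0, 0, 1, 0, 0)"
        using k by (intro S2free[OF y0]) auto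
      ultimately show False by contradiction
    qed
  qed
  have d9: "9 dvd q" using qs by presburger
  have least: "(LEAST q'::nat. 0 < q' \<and> (\<exists>s'::nat. 0 < s' \<and> 4 * q' = 9 * s')) = 9"
  proof (rule Least_equality)
    show "0 < (9::nat) \<and> (\<exists>s'::nat. 0 < s' \<and> 4 * 9 = 9 * s')" by (intro conjI exI[of _ 4]) auto
  next
    fix y :: nat assume "0 < y \<and> (\<exists>s'::nat. 0 < s' \<and> 4 * y = 9 * s')"
    then obtain s' where "0 < y" "4 * y = 9 * s'" by blast
    then show "9 \<le> y" by presburger
  qed
  show ?thesis by (intro conjI img ex gen free pd fst2 snd2 gen2 free2 d9 least)
qed

end
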